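(* Let $d>0$, and for each integer $M>d$ let $\tilde{\mathcal D}_M$ be the scaled mean-field node-based function (with $p=d/M$) defined in the context. Then for every integer $N>d$ and all integers $N_1,N_2\ge N$, $$\sup_{(\alpha,\beta)\in[0,1)^2}\bigl|\tilde{\mathcal D}_{N_1}(\alpha,\beta)-\tilde{\mathcal D}_{N_2}(\alpha,\beta)\bigr|\le \frac{16d^2}{N}e^{8d}.$$
   Context: Mean-field node-based recursion: fix $M$ and $p\in(0,1]$. For $i,j\in\{1,\dots,M\}$ define $D_M(i,j)$ and $S_M(i,j)$ jointly by $S_M(i,j)=1-\sum_{k=1}^{j-1}D_M(i,k)$, $D_M(i,i)=0$, and $D_M(i,j)=p\,S_M(i,j)\,S_M(j,i)$ for $i\ne j$ (well defined by induction on $i+j$). For $\alpha\in[0,1)$ write $i_M(\alpha)=\lfloor M\alpha\rfloor+1$. The scaled function is $\tilde{\mathcal D}_M(\alpha,\beta)=M\,D_M(i_M(\alpha),i_M(\beta))$ if $\lfloor M\alpha\rfloor\neq\lfloor M\beta\rfloor$, and $\tilde{\mathcal D}_M(\alpha,\beta)=M p\,S_M(i_M(\alpha),i_M(\alpha))^2$ otherwise, with $p=d/M$. *)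

theory Defs
  imports Complex_Main
begin

function nbS :: "real \<Rightarrow> nat \<Rightarrow> nat \<Rightarrow> real" where
  "nbS p i j = 1 - (\<Sum>k\<in>{1..<j}. (if i = k then 0 else p * nbS p i k * nbS p k i))"
  by auto
termination
  by (relation "measure (\<lambda>(p, i, j). i + j)") auto

definition nbD :: "real \<Rightarrow> nat \<Rightarrow> nat \<Rightarrow> real" where
  "nbD p i j = (if i = j then 0 else p * nbS p i j * nbS p j i)"

lemma nbS_eq: "nbS p i j = 1 - (\<Sum>k\<in>{1..<j}. nbD p i k)"
  by (simp add: nbD_def)

definition iM :: "nat \<Rightarrow> real \<Rightarrow> nat" where
  "iM M \<alpha> = nat \<lfloor>real M * \<alpha>\<rfloor> + 1"

definition scaledD :: "real \<Rightarrow> nat \<Rightarrow> real \<Rightarrow> real \<Rightarrow> real" where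
  "scaledD d M \<alpha> \<beta> =
     (let p = d / real M in
      if \<lfloor>real M * \<alpha>\<rfloor> \<noteq> \<lfloor>real M * \<beta>\<rfloor>
      then real M * nbD p (iM M \<alpha>) (iM M \<beta>)
      else real M * p * (nbS p (iM M \<alpha>) (iM M \<alpha>))^2)"

end

theory Submission
  imports Defs
begin
declare nbS.simps[simp del]

lemma nbS_small: "j \<le> 1 \<Longrightarrow> nbS p i j = 1"
  using nbS_eq[of p i j] by simp

lemma nbS_Suc: "1 \<le> j \<Longrightarrow> nbS p i (Suc j) = nbS p i j - nbD p i j"
proof -
  assume j: "1 \<le> j"
  have "nbS p i (Suc j) = 1 - (\<Sum>k\<in>{1..<Suc j}. nbD p i k)" by (rule nbS_eq)
  also have "{1..<Suc j} = insert j {1..<j}" using j by auto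
  also have "1 - (\<Sum>k\<in>insert j {1..<j}. nbD p i k) = (1 - (\<Sum>k\<in>{1..<j}. nbD p i k)) - nbD p i j"
    by simp
  also have "1 - (\<Sum>k\<in>{1..<j}. nbD p i k) = nbS p i j" by (rule nbS_eq[symmetric])
  finally show ?thesis .
qed

lemma nbS_Suc': "1 \<le> j \<Longrightarrow> nbS p i (Suc j) = nbS p i j * (if i = j then 1 else 1 - p * nbS p j i)"
  by (simp add: nbS_Suc nbD_def algebra_simps)

lemma nbS_bounds:
  assumes "0 \<le> p" "p \<le> 1"
  shows "0 \<le> nbS p i j \<and> nbS p i j \<le> 1"
proof (induction "i+j" arbitrary: i j rule: less_induct)
  case less
  show ?case
  proof (cases "j \<le> 1")
    case True then show ?thesis by (simp add: nbS_small)
  next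
    case False
    then obtain j0 where j0: "j = Suc j0" "1 \<le> j0" by (cases j) auto
    have h1: "0 \<le> nbS p i j0 \<and> nbS p i j0 \<le> 1" using less j0 by auto
    have h2: "0 \<le> nbS p j0 i \<and> nbS p j0 i \<le> 1" using less j0 by auto
    have f: "0 \<le> 1 - p * nbS p j0 i \<and> 1 - p * nbS p j0 i \<le> 1"
      using h2 assms by (simp add: mult_le_one mult_nonneg_nonneg)
    show ?thesis using h1 f j0 nbS_Suc'[of j0 p i]
      by (auto simp: mult_le_one mult_nonneg_nonneg)
  qed
qed

lemma pow_upper:
  fixes y :: real
  assumes "0 \<le> y" "y \<le> 1"
  shows "(1 - y)^n \<le> 1 - real n*y + real n*real n*y^2/2"
proof (induction n)
  case 0 then show ?case by simp
next
  case (Suc n)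
  have "(1-y)^(Suc n) = (1-y) * (1-y)^n" by simp
  also have "\<dots> \<le> (1-y) * (1 - real n*y + real n*real n*y^2/2)"
    using Suc assms by (intro mult_left_mono) auto
  also have "\<dots> \<le> 1 - real (Suc n) * y + real (Suc n) * real (Suc n) * y^2/2"
  proof -
    have "0 \<le> real n * real n * y^3 / 2" using assms by simp
    moreover have "0 \<le> y^2" by simp
    ultimately show ?thesis by (simp add: algebra_simps power2_eq_square power3_eq_cube)
  qed
  finally show ?case .
qed

lemma prod_diff_le:
  fixes x y u v :: real
  assumes "0 \<le> x" "x \<le> 1" "0 \<le> y" "y \<le> 1" "0 \<le> u" "u \<le> 1" "0 \<le> v" "v \<le> 1"
  shows "\<bar>x*y - u*v\<bar> \<le> \<bar>x-u\<bar> + \<bar>y-v\<bar>"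
proof -
  have "x*y - u*v = (x-u)*y + u*(y-v)" by (simp add: algebra_simps)
  hence "\<bar>x*y - u*v\<bar> \<le> \<bar>x-u\<bar>*\<bar>y\<bar> + \<bar>u\<bar>*\<bar>y-v\<bar>" by (simp add: abs_mult[symmetric] abs_triangle_ineq)
  also have "\<dots> \<le> \<bar>x-u\<bar> + \<bar>y-v\<bar>"
    using assms by (intro add_mono) (auto intro: mult_left_le mult_left_le_one_le)
  finally show ?thesis .
qed


lemma iM_bounds:
  assumes M: "1 \<le> M" and a: "0 \<le> \<alpha>" "\<alpha> < 1"
  shows "1 \<le> iM M \<alpha>" "iM M \<alpha> \<le> M"
proof -
  have "0 \<le> real M * \<alpha>" using a by simp
  then have f0: "0 \<le> \<lfloor>real M * \<alpha>\<rfloor>" by simp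
  have "real M * \<alpha> < real M" using a M by simp
  then have "\<lfloor>real M * \<alpha>\<rfloor> < int M" by linarith
  then have "nat \<lfloor>real M * \<alpha>\<rfloor> < M" using f0 by (simp add: nat_less_iff)
  then show "1 \<le> iM M \<alpha>" "iM M \<alpha> \<le> M" by (auto simp: iM_def)
qed

lemma scaled_eq:
  assumes M: "1 \<le> M" and a: "0 \<le> \<alpha>" and b: "0 \<le> \<beta>"
  shows "scaledD d M \<alpha> \<beta> = d * nbS (d / real M) (iM M \<alpha>) (iM M \<beta>) * nbS (d / real M) (iM M \<beta>) (iM M \<alpha>)"
proof -
  have f0: "0 \<le> \<lfloor>real M * \<alpha>\<rfloor>" "0 \<le> \<lfloor>real M * \<beta>\<rfloor>" using a b by simp_all
  have Md: "real M * (d / real M) = d" using M by simp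
  have M0: "M \<noteq> 0" using M by simp
  show ?thesis
  proof (cases "\<lfloor>real M * \<alpha>\<rfloor> = \<lfloor>real M * \<beta>\<rfloor>")
    case True
    then have "iM M \<alpha> = iM M \<beta>" by (simp add: iM_def)
    then show ?thesis using True Md M0 by (simp add: scaledD_def Let_def power2_eq_square mult.assoc)
  next
    case False
    then have "nat \<lfloor>real M * \<alpha>\<rfloor> \<noteq> nat \<lfloor>real M * \<beta>\<rfloor>" using eq_nat_nat_iff[OF f0] by simp
    then have "iM M \<alpha> \<noteq> iM M \<beta>" by (simp add: iM_def)
    then show ?thesis using False Md by (simp add: scaledD_def Let_def nbD_def mult.assoc[symmetric])
  qed
qed

lemma cell_iM:
  assumes k: "1 \<le> k" and a: "0 \<le> \<alpha>"
  shows "(iM (k*M) \<alpha> - 1) div k + 1 = iM M \<alpha>"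
proof -
  define n where "n = nat \<lfloor>real (k*M) * \<alpha>\<rfloor>"
  have f0: "0 \<le> \<lfloor>real (k*M) * \<alpha>\<rfloor>" using a by simp
  have n1: "real n \<le> real k * (real M * \<alpha>)" using f0 by (simp add: n_def) linarith
  have n2: "real k * (real M * \<alpha>) < real n + 1" using f0 by (simp add: n_def) linarith
  have "n div k * k \<le> n" by simp
  then have "real (n div k) * real k \<le> real n" by (metis of_nat_le_iff of_nat_mult)
  then have "real (n div k) * real k \<le> (real M * \<alpha>) * real k" using n1 by (simp add: mult.commute)
  then have l1: "real (n div k) \<le> real M * \<alpha>" using k by simp
  have "n < (n div k + 1) * k" using k
    by (metis add.commute div_mult_mod_eq mod_less_divisor mult_Suc nat_add_left_cancel_less
        not_one_le_zero plus_1_eq_Suc zero_less_iff_neq_zero)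
  then have "n + 1 \<le> (n div k + 1) * k" by simp
  then have "real n + 1 \<le> (real (n div k) + 1) * real k" by (metis of_nat_1 of_nat_add of_nat_le_iff of_nat_mult)
  then have "(real M * \<alpha>) * real k < (real (n div k) + 1) * real k" using n2 by (simp add: mult.commute)
  then have l2: "real M * \<alpha> < real (n div k) + 1" using k by (simp add: mult_less_cancel_right)
  have "\<lfloor>real M * \<alpha>\<rfloor> = int (n div k)" using l1 l2 by (intro floor_unique) auto
  then show ?thesis by (simp add: iM_def n_def)
qed

lemma const_bound:
  fixes d :: real assumes "0 < d"
  shows "(d^3 + 4*d^2) * exp (2*d) \<le> 8 * d^2 * exp (8*d)"
proof -
  have "d \<le> exp (6*d)" using exp_ge_add_one_self[of "6*d"] assms by linarith
  then have "d * exp (2*d) \<le> exp (6*d) * exp (2*d)" by (intro mult_right_mono) auto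
  also have "\<dots> = exp (8*d)" by (simp flip: exp_add)
  finally have h1: "d * exp (2*d) \<le> exp (8*d)" .
  have h2: "exp (2*d) \<le> exp (8*d)" using assms by simp
  have "(d^3 + 4*d^2) * exp (2*d) = d^2 * (d * exp (2*d)) + 4 * d^2 * exp (2*d)"
    by (simp add: power3_eq_cube power2_eq_square algebra_simps)
  also have "\<dots> \<le> d^2 * exp (8*d) + 4 * d^2 * exp (8*d)"
    using h1 h2 by (intro add_mono mult_left_mono) auto
  also have "\<dots> \<le> 8 * d^2 * exp (8*d)" by simp
  finally show ?thesis .
qed

locale fc =
  fixes d :: real and M k :: nat
  assumes dpos: "0 < d" and dM: "d \<le> real M" and k1: "1 \<le> k"
begin

definition p where "p = d / real M"
definition q where "q = d / (real k * real M)"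
definition cell :: "nat \<Rightarrow> nat" where "cell c = (c - 1) div k + 1"
definition E where "E a b = \<bar>nbS q a b - nbS p (cell a) (cell b)\<bar>"

lemma M1: "1 \<le> M" using dpos dM by (cases M) auto
lemma p_pos: "0 < p" using dpos M1 by (simp add: p_def)
lemma p_le1: "p \<le> 1" using dpos dM M1 by (simp add: p_def)
lemma kq: "real k * q = p" using k1 M1 by (simp add: p_def q_def)
lemma q_pos: "0 < q" using dpos M1 k1 by (simp add: q_def)
lemma q_le_p: "q \<le> p"
proof -
  have "1 * q \<le> real k * q" using k1 q_pos by (intro mult_right_mono) auto
  then show ?thesis using kq by simp
qed
lemma q_le1: "q \<le> 1" using q_le_p p_le1 by simp
lemma kMq: "real k * real M * q = d" using k1 M1 by (simp add: q_def)

lemma Sp: "0 \<le> nbS p i j" "nbS p i j \<le> 1"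
  using nbS_bounds[of p i j] p_pos p_le1 by auto
lemma Sq: "0 \<le> nbS q i j" "nbS q i j \<le> 1"
  using nbS_bounds[of q i j] q_pos q_le1 by auto

lemma E_nonneg: "0 \<le> E a b" by (simp add: E_def)

lemma fac_q: "0 \<le> 1 - q * x" "1 - q * x \<le> 1" if "0 \<le> x" "x \<le> 1" for x
  using that q_pos q_le1 by (auto simp: mult_le_one)

definition g :: "nat \<Rightarrow> nat \<Rightarrow> nat \<Rightarrow> real" where
  "g a m r = (if m = cell a then 1 else (1 - q * nbS p m (cell a))^r)"
definition err :: "nat \<Rightarrow> nat \<Rightarrow> nat \<Rightarrow> real" where
  "err a m r = real (m-1) * p^2/2 + (if cell a < m then p else if m = cell a then real r * q else 0)"
definition P :: "nat \<Rightarrow> nat \<Rightarrow> nat \<Rightarrow> bool" where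
  "P a m r \<longleftrightarrow> \<bar>nbS q a ((m-1)*k + r + 1) - nbS p (cell a) m * g a m r\<bar>
      \<le> err a m r + q * (\<Sum>c\<in>{1..<(m-1)*k + r + 1}. E c a)"

lemma g_bounds: "0 \<le> g a m r" "g a m r \<le> 1"
  using fac_q[OF Sp] by (auto simp: g_def power_le_one)

lemma cell_of: "r < k \<Longrightarrow> cell ((m-1)*k + r + 1) = m" if "1 \<le> m" for m r
proof -
  assume r: "r < k"
  have "((m-1)*k + r) div k = m - 1" using r k1 by simp
  then show ?thesis using that by (simp add: cell_def)
qed

lemma P_base: "1 \<le> a \<Longrightarrow> P a 1 0"
  using p_pos by (simp add: P_def g_def err_def nbS_small)

lemma P_step:
  assumes m: "1 \<le> m" and r: "r < k" and IH: "P a m r"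
  shows "P a m (Suc r)"
proof -
  define b where "b = (m-1)*k + r + 1"
  have b1: "1 \<le> b" by (simp add: b_def)
  have cb: "cell b = m" using cell_of[OF m r] by (simp add: b_def)
  have bS: "(m-1)*k + Suc r + 1 = Suc b" by (simp add: b_def)
  have sumS: "(\<Sum>c\<in>{1..<Suc b}. E c a) = (\<Sum>c\<in>{1..<b}. E c a) + E b a"
    using b1 by (simp add: atLeastLessThanSuc)
  define X where "X = nbS q a b"
  define Y where "Y = nbS p (cell a) m * g a m r"
  define \<Sigma> where "\<Sigma> = (\<Sum>c\<in>{1..<b}. E c a)"
  have IH': "\<bar>X - Y\<bar> \<le> err a m r + q * \<Sigma>" using IH by (simp add: P_def X_def Y_def \<Sigma>_def b_def)
  have XS: "nbS q a (Suc b) = X * (if a = b then 1 else 1 - q * nbS q b a)"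
    using nbS_Suc'[OF b1] by (simp add: X_def)
  have Enn: "0 \<le> E b a" by (rule E_nonneg)
  show ?thesis
  proof (cases "m = cell a")
    case False
    have ab: "a \<noteq> b" using False cb by auto
    have gS: "g a m (Suc r) = g a m r * (1 - q * nbS p m (cell a))" using False by (simp add: g_def)
    have "\<bar>X * (1 - q * nbS q b a) - Y * (1 - q * nbS p m (cell a))\<bar>
          \<le> \<bar>X - Y\<bar> + \<bar>(1 - q * nbS q b a) - (1 - q * nbS p m (cell a))\<bar>"
      apply (rule prod_diff_le)
      using Sq Sp g_bounds fac_q[OF Sq(1) Sq(2)] fac_q[OF Sp(1) Sp(2)]
      by (auto simp: X_def Y_def mult_le_one)
    also have "\<bar>(1 - q * nbS q b a) - (1 - q * nbS p m (cell a))\<bar> = \<bar>q * (nbS q b a - nbS p m (cell a))\<bar>"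
      by (simp add: algebra_simps)
    also have "\<dots> = q * E b a"
      using q_pos cb by (simp add: E_def abs_mult)
    finally have "\<bar>X * (1 - q * nbS q b a) - Y * (1 - q * nbS p m (cell a))\<bar> \<le> err a m r + q * \<Sigma> + q * E b a"
      using IH' by simp
    moreover have eq1: "nbS p (cell a) m * g a m (Suc r) = Y * (1 - q*nbS p m (cell a))"
      by (simp add: Y_def gS)
    moreover have eq2: "err a m (Suc r) = err a m r" using False by (simp add: err_def)
    ultimately show ?thesis unfolding P_def bS XS eq1 eq2 sumS \<Sigma>_def[symmetric] using ab
      by (simp add: distrib_left add.assoc)
  next
    case True
    define f where "f = (if a = b then 1 else 1 - q * nbS q b a)"
    have f: "1 - q \<le> f" "f \<le> 1" using Sq q_pos by (auto simp: f_def mult_le_one)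
    have X01: "0 \<le> X" "X \<le> 1" using Sq by (auto simp: X_def)
    have "X * f \<le> X * 1" using f X01 by (intro mult_left_mono) auto
    hence "\<bar>X * f - X\<bar> = X * (1 - f)" by (simp add: algebra_simps)
    also have "\<dots> \<le> 1 * q" using f X01 by (intro mult_mono) auto
    finally have a1: "\<bar>X * f - X\<bar> \<le> q" by simp
    have "\<bar>X * f - Y\<bar> \<le> \<bar>X * f - X\<bar> + \<bar>X - Y\<bar>" by linarith
    also have "\<dots> \<le> q + (err a m r + q * \<Sigma>)" using a1 IH' by linarith
    also have "\<dots> \<le> err a m (Suc r) + q * (\<Sigma> + E b a)"
      using True Enn q_pos by (simp add: err_def algebra_simps)
    moreover have eq1: "nbS p (cell a) m * g a m (Suc r) = Y"
      using True by (simp add: Y_def g_def)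
    ultimately show ?thesis unfolding P_def bS XS eq1 sumS \<Sigma>_def[symmetric] f_def[symmetric]
      by simp
  qed
qed

lemma pow_diff_bound:
  assumes "0 \<le> x" "x \<le> 1"
  shows "\<bar>(1 - q * x)^k - (1 - p * x)\<bar> \<le> p^2/2"
proof -
  have y: "0 \<le> q*x" "q*x \<le> 1" using assms q_pos q_le1 by (auto simp: mult_le_one)
  have lo: "1 + real k * (- (q*x)) \<le> (1 + - (q*x))^k"
    by (rule Bernoulli_inequality) (use y in auto)
  have up: "(1 - q*x)^k \<le> 1 - real k*(q*x) + real k*real k*(q*x)^2/2"
    by (rule pow_upper[OF y])
  have kqx: "real k * (q*x) = p * x" using kq by (simp add: mult.assoc[symmetric])
  have "real k*real k*(q*x)^2 = (real k * (q*x))^2" by (simp add: power2_eq_square algebra_simps)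
  also have "\<dots> = (p*x)^2" unfolding kqx ..
  also have "\<dots> \<le> p^2" using assms p_pos by (simp add: power_mult_distrib mult_left_le power_le_one)
  finally have "real k*real k*(q*x)^2 \<le> p^2" .
  then show ?thesis using lo up kqx by (simp add: abs_le_iff)
qed

lemma P_trans:
  assumes m: "1 \<le> m" and IH: "P a m k"
  shows "P a (Suc m) 0"
proof -
  define b where "b = (m-1)*k + k + 1"
  have bS: "(Suc m - 1)*k + 0 + 1 = b" using m by (cases m) (auto simp: b_def)
  define X where "X = nbS q a b"
  define \<Sigma> where "\<Sigma> = (\<Sum>c\<in>{1..<b}. E c a)"
  have IH': "\<bar>X - nbS p (cell a) m * g a m k\<bar> \<le> err a m k + q * \<Sigma>"
    using IH by (simp add: P_def X_def \<Sigma>_def b_def)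
  have key: "\<bar>nbS p (cell a) m * g a m k - nbS p (cell a) (Suc m)\<bar> \<le> err a (Suc m) 0 - err a m k"
  proof (cases "m = cell a")
    case True
    have "nbS p (cell a) (Suc m) = nbS p (cell a) m" using nbS_Suc'[OF m] True by simp
    then show ?thesis using True m kq by (simp add: g_def err_def of_nat_diff algebra_simps)
  next
    case False
    have e1: "nbS p (cell a) (Suc m) = nbS p (cell a) m * (1 - p * nbS p m (cell a))"
      using nbS_Suc'[OF m, of p "cell a"] False by auto
    have "\<bar>nbS p (cell a) m * g a m k - nbS p (cell a) (Suc m)\<bar>
        = nbS p (cell a) m * \<bar>(1 - q * nbS p m (cell a))^k - (1 - p * nbS p m (cell a))\<bar>"
      using False Sp by (simp add: e1 g_def abs_mult right_diff_distrib[symmetric])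
    also have "\<dots> \<le> 1 * (p^2/2)"
      using Sp pow_diff_bound[OF Sp(1) Sp(2)] by (intro mult_mono) auto
    also have "\<dots> = err a (Suc m) 0 - err a m k"
      using False m by (auto simp: err_def of_nat_diff field_simps)
    finally show ?thesis by simp
  qed
  have "\<bar>X - nbS p (cell a) (Suc m) * g a (Suc m) 0\<bar> \<le> err a (Suc m) 0 + q * \<Sigma>"
  proof -
    have g0: "g a (Suc m) 0 = 1" by (simp add: g_def)
    show ?thesis unfolding g0 mult_1_right using IH' key by linarith
  qed
  then show ?thesis unfolding P_def bS X_def[symmetric] \<Sigma>_def[symmetric] .
qed

lemma P_all: "1 \<le> a \<Longrightarrow> 1 \<le> m \<Longrightarrow> r \<le> k \<Longrightarrow> P a m r"
proof -
  assume a: "1 \<le> a"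
  have inner: "P a m 0 \<Longrightarrow> 1 \<le> m \<Longrightarrow> r \<le> k \<Longrightarrow> P a m r" for m r
    by (induction r) (auto intro: P_step)
  have "\<forall>r\<le>k. P a (Suc m0) r" for m0
  proof (induction m0)
    case 0 then show ?case using inner P_base[OF a] by auto
  next
    case (Suc m0)
    then have "P a (Suc (Suc m0)) 0" using P_trans[of "Suc m0" a] by auto
    then show ?case using inner by auto
  qed
  then show "1 \<le> m \<Longrightarrow> r \<le> k \<Longrightarrow> P a m r" by (cases m) auto
qed

definition eta where "eta = real M * p^2/2 + 2*p"

lemma eta_nonneg: "0 \<le> eta" using p_pos by (simp add: eta_def)

lemma E_rec:
  assumes a: "1 \<le> a" and b: "1 \<le> b" "b \<le> k*M"
  shows "E a b \<le> eta + q * (\<Sum>c\<in>{1..<b}. E c a)"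
proof -
  define m where "m = (b-1) div k + 1"
  define r where "r = (b-1) mod k"
  have r: "r < k" using k1 by (simp add: r_def)
  have m1: "1 \<le> m" by (simp add: m_def)
  have bm: "(m-1)*k + r + 1 = b" using b by (simp add: m_def r_def)
  have mM: "m \<le> M"
  proof -
    have "b - 1 < M * k" using b k1 by (simp add: mult.commute)
    then have "(b-1) div k < M" by (rule less_mult_imp_div_less)
    then show ?thesis by (simp add: m_def)
  qed
  have cb: "cell b = m" by (simp add: cell_def m_def)
  define X where "X = nbS q a b"
  define S where "S = nbS p (cell a) m"
  define \<Sigma> where "\<Sigma> = (\<Sum>c\<in>{1..<b}. E c a)"
  have "P a m r" using P_all[OF a m1, of r] r by simp
  then have PP: "\<bar>X - S * g a m r\<bar> \<le> err a m r + q * \<Sigma>"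
    unfolding P_def bm X_def S_def \<Sigma>_def .
  have S01: "0 \<le> S" "S \<le> 1" using Sp by (auto simp: S_def)
  have rq: "real r * q \<le> p"
  proof -
    have "real r * q \<le> real k * q" using r q_pos by (intro mult_right_mono) auto
    then show ?thesis using kq by simp
  qed
  have extra: "\<bar>S * g a m r - S\<bar> \<le> (if m = cell a then 0 else p)"
  proof (cases "m = cell a")
    case True then show ?thesis by (simp add: g_def)
  next
    case False
    define x where "x = nbS p m (cell a)"
    have x: "0 \<le> x" "x \<le> 1" using Sp by (auto simp: x_def)
    have y: "0 \<le> q*x" "q*x \<le> 1" using x q_pos q_le1 by (auto simp: mult_le_one)
    have lo: "1 + real r * (- (q*x)) \<le> (1 + - (q*x))^r"
      by (rule Bernoulli_inequality) (use y in auto)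
    have up: "(1 - q*x)^r \<le> 1" using y by (simp add: power_le_one)
    have "real r * q * x \<le> real r * q * 1" using x q_pos by (intro mult_left_mono) auto
    then have "real r * (q * x) \<le> real r * q * 1" by (simp add: mult.assoc)
    then have "\<bar>(1 - q*x)^r - 1\<bar> \<le> p" using lo up rq by (simp add: abs_le_iff)
    moreover have "\<bar>S * g a m r - S\<bar> = S * \<bar>(1 - q*x)^r - 1\<bar>"
    proof -
      have "S * g a m r - S = S * ((1 - q*x)^r - 1)" using False by (simp add: g_def x_def algebra_simps)
      then show ?thesis using S01 by (simp add: abs_mult)
    qed
    moreover have "S * \<bar>(1 - q*x)^r - 1\<bar> \<le> 1 * p"
      using S01 p_pos calculation(1) by (intro mult_mono) auto
    ultimately have "\<bar>S * g a m r - S\<bar> \<le> 1 * p" by simp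
    then show ?thesis using False by simp
  qed
  have em: "real (m-1) * p^2/2 \<le> real M * p^2/2"
    using mM by (intro divide_right_mono mult_right_mono) auto
  have "E a b = \<bar>X - S\<bar>" by (simp add: E_def X_def S_def cb)
  also have "\<dots> \<le> \<bar>X - S * g a m r\<bar> + \<bar>S * g a m r - S\<bar>" by linarith
  also have "\<dots> \<le> eta + q * \<Sigma>"
  proof -
    have eb: "err a m r + (if m = cell a then 0 else p) \<le> eta"
    proof (cases "m = cell a")
      case True
      then have "err a m r = real (m-1) * p^2/2 + real r * q" by (simp add: err_def)
      then show ?thesis using True em rq p_pos unfolding eta_def if_P[OF True] by linarith
    next
      case False
      then have "err a m r \<le> real (m-1) * p^2/2 + p" using p_pos by (simp add: err_def)
      then show ?thesis using False em unfolding eta_def by simp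
    qed
    show ?thesis using PP extra eb by linarith
  qed
  finally show ?thesis by (simp add: \<Sigma>_def)
qed

lemma geom: "q * (\<Sum>c<n. (1+q)^c) = (1+q)^n - 1"
  by (induction n) (auto simp: algebra_simps)

lemma E_gronwall:
  "\<And>a b. a + b = n \<Longrightarrow> 1 \<le> a \<Longrightarrow> a \<le> k*M \<Longrightarrow> 1 \<le> b \<Longrightarrow> b \<le> k*M \<Longrightarrow> E a b \<le> eta * (1+q)^(a+b)"
proof (induction n rule: less_induct)
  case (less n a b)
  have "(\<Sum>c\<in>{1..<b}. E c a) \<le> (\<Sum>c\<in>{1..<b}. eta * (1+q)^(c+a))"
  proof (rule sum_mono)
    fix c assume c: "c \<in> {1..<b}"
    show "E c a \<le> eta * (1+q)^(c+a)"
      using less.IH[of "c+a" c a] less.prems c by auto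
  qed
  also have "\<dots> \<le> (\<Sum>c<b. eta * (1+q)^(c+a))"
    using eta_nonneg q_pos by (intro sum_mono2) auto
  also have "\<dots> = eta * (1+q)^a * (\<Sum>c<b. (1+q)^c)"
    by (simp add: sum_distrib_left power_add algebra_simps)
  finally have s0: "(\<Sum>c\<in>{1..<b}. E c a) \<le> eta * (1+q)^a * (\<Sum>c<b. (1+q)^c)" .
  have "q * (\<Sum>c\<in>{1..<b}. E c a) \<le> q * (eta * (1+q)^a * (\<Sum>c<b. (1+q)^c))"
    using s0 q_pos by (intro mult_left_mono) auto
  also have "\<dots> = eta * (1+q)^a * (q * (\<Sum>c<b. (1+q)^c))" by (simp add: algebra_simps)
  also have "\<dots> = eta * (1+q)^a * ((1+q)^b - 1)" by (simp only: geom)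
  finally have s: "q * (\<Sum>c\<in>{1..<b}. E c a) \<le> eta * (1+q)^a * ((1+q)^b - 1)" .
  have pa: "1 \<le> (1+q)^a" using q_pos by (simp add: one_le_power)
  have "E a b \<le> eta + eta * (1+q)^a * ((1+q)^b - 1)"
    using E_rec[of a b] less.prems s by simp
  also have "\<dots> = eta * (1+q)^(a+b) - eta * ((1+q)^a - 1)"
    by (simp add: power_add algebra_simps)
  also have "\<dots> \<le> eta * (1+q)^(a+b)"
    using pa eta_nonneg by simp
  finally show ?case .
qed

lemma E_final:
  assumes "1 \<le> a" "a \<le> k*M" "1 \<le> b" "b \<le> k*M"
  shows "E a b \<le> eta * exp (2*d)"
proof -
  have "E a b \<le> eta * (1+q)^(a+b)" using E_gronwall assms by blast
  also have "(1+q)^(a+b) \<le> (1+q)^(2*(k*M))"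
    using assms q_pos by (intro power_increasing) auto
  also have "\<dots> \<le> exp q ^ (2*(k*M))"
    using q_pos by (intro power_mono) (auto simp: add.commute)
  also have "\<dots> = exp (real (2*(k*M)) * q)" by (rule exp_of_nat_mult[symmetric])
  also have "real (2*(k*M)) * q = 2*d" using kMq by simp
  finally show ?thesis using eta_nonneg
    by (simp add: mult_left_mono)
qed

lemma compare:
  assumes a: "0 \<le> \<alpha>" "\<alpha> < 1" and b: "0 \<le> \<beta>" "\<beta> < 1"
  shows "\<bar>scaledD d (k*M) \<alpha> \<beta> - scaledD d M \<alpha> \<beta>\<bar> \<le> 8 * d^2 * exp (8*d) / real M"
proof -
  have kM1: "1 \<le> k*M" using k1 M1 by simp
  define x where "x = iM (k*M) \<alpha>"
  define y where "y = iM (k*M) \<beta>"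
  have x: "1 \<le> x" "x \<le> k*M" using iM_bounds[OF kM1 a] by (auto simp: x_def)
  have y: "1 \<le> y" "y \<le> k*M" using iM_bounds[OF kM1 b] by (auto simp: y_def)
  have cx: "cell x = iM M \<alpha>" using cell_iM[OF k1 a(1)] by (simp add: x_def cell_def)
  have cy: "cell y = iM M \<beta>" using cell_iM[OF k1 b(1)] by (simp add: y_def cell_def)
  have qq: "d / real (k*M) = q" by (simp add: q_def)
  have pp: "d / real M = p" by (simp add: p_def)
  have e1: "scaledD d (k*M) \<alpha> \<beta> = d * (nbS q x y * nbS q y x)"
    using scaled_eq[OF kM1 a(1) b(1), of d] unfolding qq x_def[symmetric] y_def[symmetric] by (simp add: mult.assoc)
  have e2: "scaledD d M \<alpha> \<beta> = d * (nbS p (cell x) (cell y) * nbS p (cell y) (cell x))"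
    using scaled_eq[OF M1 a(1) b(1), of d] unfolding pp cx[symmetric] cy[symmetric] by (simp add: mult.assoc)
  have "\<bar>scaledD d (k*M) \<alpha> \<beta> - scaledD d M \<alpha> \<beta>\<bar>
      = d * \<bar>nbS q x y * nbS q y x - nbS p (cell x) (cell y) * nbS p (cell y) (cell x)\<bar>"
    using dpos by (simp add: e1 e2 abs_mult right_diff_distrib[symmetric])
  also have "\<dots> \<le> d * (E x y + E y x)"
    using dpos Sp Sq by (intro mult_left_mono) (auto simp: E_def intro!: prod_diff_le)
  also have "\<dots> \<le> d * (eta * exp (2*d) + eta * exp (2*d))"
    using dpos E_final[OF x y] E_final[OF y x] by (intro mult_left_mono add_mono) auto
  also have "\<dots> = (d^3 + 4*d^2) * exp (2*d) / real M"
    using M1 by (simp add: eta_def p_def field_simps power2_eq_square power3_eq_cube)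
  also have "\<dots> \<le> 8 * d^2 * exp (8*d) / real M"
    using const_bound[OF dpos] M1 by (intro divide_right_mono) auto
  finally show ?thesis .
qed

end

theorem mainTheorem2:
  fixes d :: real and N N1 N2 :: nat
  assumes "d > 0" and "real N > d" and "N1 \<ge> N" and "N2 \<ge> N"
  shows "(SUP ab \<in> {0..<1} \<times> {0..<1}.
            \<bar>scaledD d N1 (fst ab) (snd ab) - scaledD d N2 (fst ab) (snd ab)\<bar>)
         \<le> 16 * d^2 / real N * exp (8 * d)"
proof -
  have Npos: "0 < real N" using assms by linarith
  have fc1: "fc d N1 N2" using assms Npos by unfold_locales auto
  have fc2: "fc d N2 N1" using assms Npos by unfold_locales auto
  define C where "C = 8 * d^2 * exp (8*d)"
  have C0: "0 \<le> C" by (simp add: C_def)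
  have b1: "C / real N1 \<le> C / real N" using assms Npos C0 by (intro divide_left_mono) auto
  have b2: "C / real N2 \<le> C / real N" using assms Npos C0 by (intro divide_left_mono) auto
  show ?thesis
  proof (rule cSUP_least)
    show "{0..<(1::real)} \<times> {0..<(1::real)} \<noteq> {}" by auto
  next
    fix ab :: "real \<times> real" assume ab: "ab \<in> {0..<1} \<times> {0..<1}"
    obtain \<alpha> \<beta> where e: "ab = (\<alpha>, \<beta>)" by (cases ab)
    have a: "0 \<le> \<alpha>" "\<alpha> < 1" and b: "0 \<le> \<beta>" "\<beta> < 1" using ab e by auto
    have h1: "\<bar>scaledD d (N2*N1) \<alpha> \<beta> - scaledD d N1 \<alpha> \<beta>\<bar> \<le> C / real N1"
      using fc.compare[OF fc1 a b] by (simp add: C_def)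
    then have h1': "\<bar>scaledD d (N1*N2) \<alpha> \<beta> - scaledD d N1 \<alpha> \<beta>\<bar> \<le> C / real N1"
      by (simp add: mult.commute)
    have h2: "\<bar>scaledD d (N1*N2) \<alpha> \<beta> - scaledD d N2 \<alpha> \<beta>\<bar> \<le> C / real N2"
      using fc.compare[OF fc2 a b] by (simp add: C_def)
    have "\<bar>scaledD d N1 \<alpha> \<beta> - scaledD d N2 \<alpha> \<beta>\<bar> \<le> C / real N + C / real N"
      using h1' h2 b1 b2 by linarith
    also have "\<dots> = 16 * d^2 / real N * exp (8 * d)" by (simp add: C_def)
    finally show "\<bar>scaledD d N1 (fst ab) (snd ab) - scaledD d N2 (fst ab) (snd ab)\<bar>
         \<le> 16 * d^2 / real N * exp (8 * d)" using e by simp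
  qed
qed

end
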